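(* Let $J\subseteq I$ and let $A$ be a $J$-antichain in $R^+$. Then $A$ is an abelian $J$-antichain if and only if both of the following hold: (1) for all $\alpha,\beta\in A$ with $\alpha\ne\beta$ there exists $i\in I$ with $d_i(\alpha)+d_i(\beta)>d_i(\theta)$; (2) for every $\alpha\in A$ there exists $i\in I$ with $2d_i(\alpha)>d_i(\theta)$.
   Context: $\mathfrak g$ is a complex simple Lie algebra of rank $n$ with root system $R$, $I=\{1,\dots,n\}$, simple roots $\{\alpha_i\}_{i\in I}$, $Q^+$ their $\mathbb Z_{\ge0}$-span, $R^+=R\cap Q^+$, $\theta$ the highest root. For $\eta$ in the root lattice write $\eta=\sum_i d_i(\eta)\alpha_i$. Partial order: $\lambda\le\mu$ iff $\mu-\lambda\in Q^+$. For $J\subseteq I$, $R^+(J)=\{\alpha\in R^+: d_i(\alpha)=0\ \forall i\notin J\}$. A $J$-antichain is a subset $A\subseteq R^+$ with $A\cap R^+(J)=\emptyset$, distinct elements pairwise incomparable, and $\alpha-\alpha_j\notin R$ for all $\alpha\in A$, $j\in J$. $\Phi(A)=\{\alpha\in R^+:\alpha\ge\beta\text{ for some }\beta\in A\}$. A $J$-antichain $A$ is abelian if for all $\beta_1,\beta_2\in\Phi(A)$ (not necessarily distinct) $\beta_1+\beta_2\notin R$. *)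

theory Defs
  imports "HOL-Analysis.Analysis"
begin

text \<open>An (irreducible, reduced, crystallographic) root system in a Euclidean space.
  Roots of a complex simple Lie algebra of rank n are exactly such root systems
  in a Euclidean space of dimension n.\<close>

definition root_system :: "'a::euclidean_space set \<Rightarrow> bool" where
  "root_system R \<longleftrightarrow>
     finite R \<and> 0 \<notin> R \<and> span R = UNIV \<and>
     (\<forall>a\<in>R. \<forall>b\<in>R. b - (2 * (b \<bullet> a) / (a \<bullet> a)) *\<^sub>R a \<in> R) \<and>
     (\<forall>a\<in>R. \<forall>b\<in>R. 2 * (b \<bullet> a) / (a \<bullet> a) \<in> \<int>) \<and>
     (\<forall>a\<in>R. \<forall>c::real. c *\<^sub>R a \<in> R \<longrightarrow> c = 1 \<or> c = -1)"

definition irreducible_root_system :: "'a::euclidean_space set \<Rightarrow> bool" where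
  "irreducible_root_system R \<longleftrightarrow> root_system R \<and>
     \<not> (\<exists>R1 R2. R = R1 \<union> R2 \<and> R1 \<noteq> {} \<and> R2 \<noteq> {} \<and>
            (\<forall>a\<in>R1. \<forall>b\<in>R2. a \<bullet> b = 0))"

definition simple_roots :: "'a::euclidean_space set \<Rightarrow> nat \<Rightarrow> (nat \<Rightarrow> 'a) \<Rightarrow> bool" where
  "simple_roots R n alpha \<longleftrightarrow>
     alpha ` {1..n} \<subseteq> R \<and> inj_on alpha {1..n} \<and> independent (alpha ` {1..n}) \<and>
     (\<forall>b\<in>R. \<exists>c::nat \<Rightarrow> int. b = (\<Sum>j\<in>{1..n}. of_int (c j) *\<^sub>R alpha j) \<and>
        ((\<forall>j\<in>{1..n}. c j \<ge> 0) \<or> (\<forall>j\<in>{1..n}. c j \<le> 0)))"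

definition dcoef :: "nat \<Rightarrow> (nat \<Rightarrow> 'a::euclidean_space) \<Rightarrow> nat \<Rightarrow> 'a \<Rightarrow> int" where
  "dcoef n alpha i eta = (THE k. \<exists>c::nat \<Rightarrow> int.
      eta = (\<Sum>j\<in>{1..n}. of_int (c j) *\<^sub>R alpha j) \<and> c i = k)"

definition Qplus :: "nat \<Rightarrow> (nat \<Rightarrow> 'a::euclidean_space) \<Rightarrow> 'a set" where
  "Qplus n alpha = {eta. \<exists>c::nat \<Rightarrow> nat. eta = (\<Sum>j\<in>{1..n}. of_nat (c j) *\<^sub>R alpha j)}"

definition rle :: "nat \<Rightarrow> (nat \<Rightarrow> 'a::euclidean_space) \<Rightarrow> 'a \<Rightarrow> 'a \<Rightarrow> bool" where
  "rle n alpha l m \<longleftrightarrow> m - l \<in> Qplus n alpha"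

definition pos_roots :: "'a::euclidean_space set \<Rightarrow> nat \<Rightarrow> (nat \<Rightarrow> 'a) \<Rightarrow> 'a set" where
  "pos_roots R n alpha = R \<inter> Qplus n alpha"

definition highest_root :: "'a::euclidean_space set \<Rightarrow> nat \<Rightarrow> (nat \<Rightarrow> 'a) \<Rightarrow> 'a" where
  "highest_root R n alpha = (THE t. t \<in> pos_roots R n alpha \<and>
      (\<forall>b\<in>pos_roots R n alpha. rle n alpha b t))"

definition pos_roots_J :: "'a::euclidean_space set \<Rightarrow> nat \<Rightarrow> (nat \<Rightarrow> 'a) \<Rightarrow> nat set \<Rightarrow> 'a set" where
  "pos_roots_J R n alpha J = {a \<in> pos_roots R n alpha. \<forall>i\<in>{1..n}. i \<notin> J \<longrightarrow> dcoef n alpha i a = 0}"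

definition J_antichain :: "'a::euclidean_space set \<Rightarrow> nat \<Rightarrow> (nat \<Rightarrow> 'a) \<Rightarrow> nat set \<Rightarrow> 'a set \<Rightarrow> bool" where
  "J_antichain R n alpha J A \<longleftrightarrow>
     A \<subseteq> pos_roots R n alpha \<and> A \<inter> pos_roots_J R n alpha J = {} \<and>
     (\<forall>a\<in>A. \<forall>b\<in>A. a \<noteq> b \<longrightarrow> \<not> rle n alpha a b) \<and>
     (\<forall>a\<in>A. \<forall>j\<in>J. a - alpha j \<notin> R)"

definition upper_closure :: "'a::euclidean_space set \<Rightarrow> nat \<Rightarrow> (nat \<Rightarrow> 'a) \<Rightarrow> 'a set \<Rightarrow> 'a set" where
  "upper_closure R n alpha A = {a \<in> pos_roots R n alpha. \<exists>b\<in>A. rle n alpha b a}"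

definition abelian_J_antichain :: "'a::euclidean_space set \<Rightarrow> nat \<Rightarrow> (nat \<Rightarrow> 'a) \<Rightarrow> nat set \<Rightarrow> 'a set \<Rightarrow> bool" where
  "abelian_J_antichain R n alpha J A \<longleftrightarrow> J_antichain R n alpha J A \<and>
     (\<forall>b1\<in>upper_closure R n alpha A. \<forall>b2\<in>upper_closure R n alpha A. b1 + b2 \<notin> R)"

end

theory Submission
  imports Defs
begin

locale rsys =
  fixes R :: "'a::euclidean_space set" and alpha :: "nat \<Rightarrow> 'a" and n :: nat
  assumes n_def: "n = DIM('a)"
    and rs: "root_system R"
    and sr: "simple_roots R n alpha"
begin

abbreviation "I \<equiv> {1..n}"

definition lin :: "(nat \<Rightarrow> real) \<Rightarrow> 'a" where
  "lin c = (\<Sum>j\<in>I. c j *\<^sub>R alpha j)"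

lemma alpha_R: "j \<in> I \<Longrightarrow> alpha j \<in> R"
  using sr unfolding simple_roots_def by auto

lemma inj: "inj_on alpha I" using sr unfolding simple_roots_def by auto
lemma indep: "independent (alpha ` I)" using sr unfolding simple_roots_def by auto

lemma lin_uniq:
  assumes "lin c = lin d" "j \<in> I" shows "c j = d j"
proof (rule ccontr)
  assume ne: "c j \<noteq> d j"
  define u where "u v = (c (the_inv_into I alpha v) - d (the_inv_into I alpha v))" for v
  have "(\<Sum>v\<in>alpha ` I. u v *\<^sub>R v) = (\<Sum>i\<in>I. u (alpha i) *\<^sub>R alpha i)"
    by (rule sum.reindex[OF inj, unfolded comp_def])
  also have "\<dots> = (\<Sum>i\<in>I. (c i - d i) *\<^sub>R alpha i)"
  proof (rule sum.cong)
    fix i assume "i \<in> I"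
    then show "u (alpha i) *\<^sub>R alpha i = (c i - d i) *\<^sub>R alpha i"
      using the_inv_into_f_f[OF inj, of i] by (simp add: u_def)
  qed simp
  also have "\<dots> = lin c - lin d" by (simp add: lin_def scaleR_diff_left sum_subtractf)
  finally have "(\<Sum>v\<in>alpha ` I. u v *\<^sub>R v) = 0" using assms by simp
  moreover have "u (alpha j) \<noteq> 0" using ne assms the_inv_into_f_f[OF inj, of j] by (simp add: u_def)
  moreover have "finite (alpha ` I)" by simp
  ultimately have "dependent (alpha ` I)"
  proof -
    have "finite (alpha ` I)" by simp
    moreover have "\<exists>v\<in>alpha ` I. u v \<noteq> 0" using \<open>u (alpha j) \<noteq> 0\<close> assms(2) by blast
    ultimately show ?thesis unfolding dependent_finite[OF \<open>finite (alpha ` I)\<close>]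
      using \<open>(\<Sum>v\<in>alpha ` I. u v *\<^sub>R v) = 0\<close> by blast
  qed
  thus False using indep by simp
qed

lemma span_all: "span (alpha ` I) = UNIV"
proof -
  have "card (alpha ` I) = n" using card_image[OF inj] by simp
  hence "UNIV \<subseteq> span (alpha ` I)"
    using card_ge_dim_independent[of "alpha ` I" UNIV] indep n_def by (simp add: dim_UNIV)
  thus ?thesis by auto
qed

lemma lin_ex: "\<exists>c. x = lin c"
proof -
  have "x \<in> span (alpha ` I)" using span_all by simp
  then obtain u where "x = (\<Sum>v\<in>alpha ` I. u v *\<^sub>R v)" using span_finite[of "alpha ` I"] by auto
  also have "\<dots> = lin (\<lambda>i. u (alpha i))"
    unfolding lin_def by (rule sum.reindex[OF inj, unfolded comp_def])
  finally show ?thesis by blast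
qed

definition crd :: "'a \<Rightarrow> nat \<Rightarrow> real" where
  "crd x = (SOME c. x = lin c)"

lemma lin_crd: "lin (crd x) = x"
  unfolding crd_def using someI_ex[OF lin_ex[of x]] by simp

lemma crd_lin: "j \<in> I \<Longrightarrow> crd (lin c) j = c j"
  using lin_uniq[of "crd (lin c)" c j] lin_crd by simp

lemma crd_eqI: "x = lin c \<Longrightarrow> j \<in> I \<Longrightarrow> crd x j = c j"
  using crd_lin by simp

lemma crd_add: "j \<in> I \<Longrightarrow> crd (x + y) j = crd x j + crd y j"
proof -
  assume j: "j \<in> I"
  have "x + y = lin (\<lambda>i. crd x i + crd y i)"
    using lin_crd[of x] lin_crd[of y] by (simp add: lin_def scaleR_add_left sum.distrib)
  thus ?thesis using crd_eqI j by blast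
qed

lemma crd_scale: "j \<in> I \<Longrightarrow> crd (r *\<^sub>R x) j = r * crd x j"
proof -
  assume j: "j \<in> I"
  have "r *\<^sub>R x = r *\<^sub>R lin (crd x)" by (simp add: lin_crd)
  also have "\<dots> = lin (\<lambda>i. r * crd x i)"
    by (simp add: lin_def scaleR_sum_right)
  finally have "r *\<^sub>R x = lin (\<lambda>i. r * crd x i)" .
  thus ?thesis using crd_eqI j by blast
qed

lemma crd_minus: "j \<in> I \<Longrightarrow> crd (- x) j = - crd x j"
  using crd_scale[of j "-1" x] by simp

lemma crd_diff: "j \<in> I \<Longrightarrow> crd (x - y) j = crd x j - crd y j"
  using crd_add[of j x "-y"] crd_minus[of j y] by simp

lemma crd_zero: "j \<in> I \<Longrightarrow> crd 0 j = 0"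
  using crd_scale[of j 0 0] by simp

lemma crd_alpha: "j \<in> I \<Longrightarrow> i \<in> I \<Longrightarrow> crd (alpha i) j = (if i = j then 1 else 0)"
proof -
  assume j: "j \<in> I" and i: "i \<in> I"
  have "lin (\<lambda>k. if k = i then 1 else 0) = (\<Sum>k\<in>I. if k = i then alpha k else 0)"
    unfolding lin_def by (rule sum.cong) auto
  also have "\<dots> = alpha i" using i by simp
  finally have "alpha i = lin (\<lambda>k. if k = i then 1 else 0)" by simp
  thus ?thesis using crd_eqI j by auto
qed

lemma vec_eqI: "(\<And>j. j \<in> I \<Longrightarrow> crd x j = crd y j) \<Longrightarrow> x = y"
proof -
  assume h: "\<And>j. j \<in> I \<Longrightarrow> crd x j = crd y j"
  have "lin (crd x) = lin (crd y)" unfolding lin_def by (rule sum.cong) (simp_all add: h)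
  thus ?thesis by (simp add: lin_crd)
qed

lemma inner_crd: "x \<bullet> y = (\<Sum>i\<in>I. crd x i * (alpha i \<bullet> y))"
proof -
  have "x \<bullet> y = lin (crd x) \<bullet> y" by (simp add: lin_crd)
  thus ?thesis by (simp add: lin_def inner_sum_left)
qed

end


context rsys begin

lemma fin: "finite R" using rs unfolding root_system_def by auto
lemma zero_notin: "0 \<notin> R" using rs unfolding root_system_def by auto
lemma refl_R: "a \<in> R \<Longrightarrow> b \<in> R \<Longrightarrow> b - (2 * (b \<bullet> a) / (a \<bullet> a)) *\<^sub>R a \<in> R"
  using rs unfolding root_system_def by auto
lemma int_R: "a \<in> R \<Longrightarrow> b \<in> R \<Longrightarrow> 2 * (b \<bullet> a) / (a \<bullet> a) \<in> \<int>"
  using rs unfolding root_system_def by auto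
lemma red_R: "a \<in> R \<Longrightarrow> c *\<^sub>R a \<in> R \<Longrightarrow> c = 1 \<or> c = -1"
  using rs unfolding root_system_def by auto
lemma sq_pos: "a \<in> R \<Longrightarrow> a \<bullet> a > 0" using zero_notin by (metis inner_gt_zero_iff)

lemma neg_R: "a \<in> R \<Longrightarrow> - a \<in> R"
proof -
  assume a: "a \<in> R"
  have e: "2 * (a \<bullet> a) / (a \<bullet> a) = 2" using sq_pos[OF a] by simp
  have "a - (2 * (a \<bullet> a) / (a \<bullet> a)) *\<^sub>R a = a - 2 *\<^sub>R a" by (simp only: e)
  also have "\<dots> = - a" by (simp add: scaleR_2)
  finally have "a - (2 * (a \<bullet> a) / (a \<bullet> a)) *\<^sub>R a = - a" .
  thus ?thesis using refl_R[OF a a] by simp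
qed

lemma root_coeffs: "b \<in> R \<Longrightarrow> \<exists>c::nat\<Rightarrow>int. (\<forall>j\<in>I. crd b j = of_int (c j)) \<and>
   ((\<forall>j\<in>I. c j \<ge> 0) \<or> (\<forall>j\<in>I. c j \<le> 0))"
proof -
  assume b: "b \<in> R"
  then obtain c :: "nat \<Rightarrow> int" where c: "b = (\<Sum>j\<in>I. of_int (c j) *\<^sub>R alpha j)"
     and s: "(\<forall>j\<in>I. c j \<ge> 0) \<or> (\<forall>j\<in>I. c j \<le> 0)"
    using sr unfolding simple_roots_def by blast
  have "b = lin (\<lambda>j. of_int (c j))" using c by (simp add: lin_def)
  hence "\<forall>j\<in>I. crd b j = of_int (c j)" using crd_eqI by blast
  thus ?thesis using s by blast
qed

lemma root_int: "b \<in> R \<Longrightarrow> j \<in> I \<Longrightarrow> crd b j \<in> \<int>"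
  using root_coeffs by (metis Ints_of_int)

lemma root_sign: "b \<in> R \<Longrightarrow> (\<forall>j\<in>I. crd b j \<ge> 0) \<or> (\<forall>j\<in>I. crd b j \<le> 0)"
  using root_coeffs by (metis of_int_0_le_iff of_int_le_0_iff)

definition latt :: "'a \<Rightarrow> bool" where "latt x \<longleftrightarrow> (\<forall>j\<in>I. crd x j \<in> \<int>)"

lemma latt_root: "b \<in> R \<Longrightarrow> latt b" using root_int latt_def by blast
lemma latt_add: "latt x \<Longrightarrow> latt y \<Longrightarrow> latt (x + y)" by (simp add: latt_def crd_add)
lemma latt_diff: "latt x \<Longrightarrow> latt y \<Longrightarrow> latt (x - y)" by (simp add: latt_def crd_diff)
lemma latt_alpha: "i \<in> I \<Longrightarrow> latt (alpha i)" using latt_root alpha_R by blast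

lemma Qplus_iff: "x \<in> Qplus n alpha \<longleftrightarrow> latt x \<and> (\<forall>j\<in>I. crd x j \<ge> 0)"
proof
  assume "x \<in> Qplus n alpha"
  then obtain c :: "nat \<Rightarrow> nat" where "x = (\<Sum>j\<in>I. of_nat (c j) *\<^sub>R alpha j)" unfolding Qplus_def by blast
  hence "x = lin (\<lambda>j. of_nat (c j))" by (simp add: lin_def)
  hence "\<forall>j\<in>I. crd x j = of_nat (c j)" using crd_eqI by blast
  thus "latt x \<and> (\<forall>j\<in>I. crd x j \<ge> 0)" unfolding latt_def by (metis Ints_of_nat of_nat_0_le_iff)
next
  assume h: "latt x \<and> (\<forall>j\<in>I. crd x j \<ge> 0)"
  define c where "c j = nat \<lfloor>crd x j\<rfloor>" for j
  have cc: "of_nat (c j) = crd x j" if "j \<in> I" for j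
    using h that unfolding latt_def c_def by simp
  have "x = lin (crd x)" by (simp add: lin_crd)
  also have "\<dots> = (\<Sum>j\<in>I. of_nat (c j) *\<^sub>R alpha j)" unfolding lin_def
    by (rule sum.cong) (simp_all add: cc)
  finally show "x \<in> Qplus n alpha" unfolding Qplus_def by blast
qed

lemma rle_iff: "latt x \<Longrightarrow> latt y \<Longrightarrow> rle n alpha x y \<longleftrightarrow> (\<forall>j\<in>I. crd x j \<le> crd y j)"
  unfolding rle_def Qplus_iff using latt_diff by (auto simp: crd_diff)

definition pos :: "'a \<Rightarrow> bool" where "pos x \<longleftrightarrow> x \<in> R \<and> (\<forall>j\<in>I. crd x j \<ge> 0)"

lemma pos_roots_iff: "x \<in> pos_roots R n alpha \<longleftrightarrow> pos x"
  by (auto simp: pos_roots_def pos_def Qplus_iff latt_root)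

lemma dcoef_crd: assumes "latt x" "j \<in> I" shows "of_int (dcoef n alpha j x) = crd x j"
proof -
  have "dcoef n alpha j x = \<lfloor>crd x j\<rfloor>"
    unfolding dcoef_def
  proof (rule the_equality)
    have "x = lin (crd x)" by (simp add: lin_crd)
    also have "\<dots> = (\<Sum>i\<in>I. of_int \<lfloor>crd x i\<rfloor> *\<^sub>R alpha i)" unfolding lin_def
      by (rule sum.cong) (use assms in \<open>simp_all add: latt_def\<close>)
    finally have "x = (\<Sum>i\<in>I. of_int \<lfloor>crd x i\<rfloor> *\<^sub>R alpha i)" .
    thus "\<exists>c. x = (\<Sum>i\<in>I. of_int (c i) *\<^sub>R alpha i) \<and> c j = \<lfloor>crd x j\<rfloor>"
      by (intro exI[where x="\<lambda>i. \<lfloor>crd x i\<rfloor>"]) simp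
  next
    fix k assume "\<exists>c. x = (\<Sum>i\<in>I. of_int (c i) *\<^sub>R alpha i) \<and> c j = k"
    then obtain c where c: "x = (\<Sum>i\<in>I. of_int (c i) *\<^sub>R alpha i)" "c j = k" by blast
    have "x = lin (\<lambda>i. of_int (c i))" using c by (simp add: lin_def)
    hence "crd x j = of_int k" using crd_eqI assms c by auto
    thus "k = \<lfloor>crd x j\<rfloor>" by simp
  qed
  thus ?thesis using assms unfolding latt_def by simp
qed

definition ht :: "'a \<Rightarrow> real" where "ht x = (\<Sum>j\<in>I. crd x j)"

lemma ht_add: "ht (x + y) = ht x + ht y" by (simp add: ht_def crd_add sum.distrib)
lemma ht_diff: "ht (x - y) = ht x - ht y" by (simp add: ht_def crd_diff sum_subtractf)
lemma ht_alpha: "i \<in> I \<Longrightarrow> ht (alpha i) = 1"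
proof -
  assume i: "i \<in> I"
  have "ht (alpha i) = (\<Sum>j\<in>I. if j = i then 1 else 0)" unfolding ht_def
    by (rule sum.cong) (use i in \<open>auto simp: crd_alpha\<close>)
  thus ?thesis using i by simp
qed

lemma ht_pos: assumes "\<forall>j\<in>I. crd x j \<ge> 0" "x \<noteq> 0" shows "ht x > 0"
proof -
  obtain j where j: "j \<in> I" "crd x j \<noteq> 0" using assms(2) vec_eqI[of x 0] crd_zero by auto
  have "crd x j \<le> ht x" unfolding ht_def
    by (rule member_le_sum) (use assms j in auto)
  thus ?thesis using j assms(1) by force
qed

lemma prod_lt4:
  assumes a: "a \<in> R" and b: "b \<in> R" and ne: "b \<noteq> a" "b \<noteq> - a"
  shows "(2 * (a \<bullet> b) / (a \<bullet> a)) * (2 * (a \<bullet> b) / (b \<bullet> b)) < 4"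
proof -
  have na: "norm a > 0" and nb: "norm b > 0" using a b zero_notin by auto
  have "\<bar>a \<bullet> b\<bar> \<noteq> norm a * norm b"
  proof
    assume "\<bar>a \<bullet> b\<bar> = norm a * norm b"
    hence "norm a *\<^sub>R b = norm b *\<^sub>R a \<or> norm a *\<^sub>R b = - norm b *\<^sub>R a"
      using norm_cauchy_schwarz_abs_eq by blast
    then obtain c where c: "b = c *\<^sub>R a" "c = norm b / norm a \<or> c = - norm b / norm a"
    proof (elim disjE)
      assume h: "norm a *\<^sub>R b = norm b *\<^sub>R a"
      have "b = (norm b / norm a) *\<^sub>R a" using h na
        by (metis (no_types, lifting) divide_inverse_commute less_irrefl scaleR_scaleR
            inverse_eq_divide left_inverse scaleR_one)
      thus thesis using that by blast
    next
      assume h: "norm a *\<^sub>R b = - norm b *\<^sub>R a"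
      have "b = (- norm b / norm a) *\<^sub>R a" using h na
        by (metis (no_types, lifting) divide_inverse_commute less_irrefl scaleR_scaleR
            inverse_eq_divide left_inverse scaleR_one)
      thus thesis using that by blast
    qed
    hence "c = 1 \<or> c = -1" using red_R[OF a] b by blast
    thus False using c ne by auto
  qed
  hence "\<bar>a \<bullet> b\<bar> < norm a * norm b" using Cauchy_Schwarz_ineq2[of a b] by linarith
  hence "\<bar>a \<bullet> b\<bar>^2 < (norm a * norm b)^2"
    by (meson abs_ge_zero power_strict_mono zero_less_numeral)
  hence lt: "(a \<bullet> b)^2 < (a \<bullet> a) * (b \<bullet> b)"
    by (simp add: power_mult_distrib power2_norm_eq_inner)
  have pa: "a \<bullet> a > 0" "b \<bullet> b > 0" using sq_pos a b by auto
  have "(2 * (a \<bullet> b) / (a \<bullet> a)) * (2 * (a \<bullet> b) / (b \<bullet> b)) = 4 * ((a \<bullet> b)^2 / ((a \<bullet> a) * (b \<bullet> b)))"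
    by (simp add: power2_eq_square)
  also have "(a \<bullet> b)^2 / ((a \<bullet> a) * (b \<bullet> b)) < 1" using lt pa by simp
  finally show ?thesis by simp
qed

lemma int_neg_prod: fixes k l :: int assumes "k < 0" "l < 0" "k * l < 4" shows "k = -1 \<or> l = -1"
proof (rule ccontr)
  assume "\<not> (k = -1 \<or> l = -1)"
  hence "-k \<ge> 2" "-l \<ge> 2" using assms by auto
  hence "(-k) * (-l) \<ge> 2 * 2" by (rule mult_mono) (use assms in auto)
  thus False using assms by simp
qed

lemma sum_root:
  assumes a: "a \<in> R" and b: "b \<in> R" and neg: "a \<bullet> b < 0" and ne: "b \<noteq> - a"
  shows "a + b \<in> R"
proof -
  have pa: "a \<bullet> a > 0" "b \<bullet> b > 0" using sq_pos a b by auto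
  have ba: "b \<noteq> a"
  proof
    assume "b = a" hence "a \<bullet> b = a \<bullet> a" by simp
    thus False using neg pa(1) by linarith
  qed
  obtain k where k: "2 * (b \<bullet> a) / (a \<bullet> a) = of_int k" using int_R[OF a b] Ints_cases by metis
  obtain l where l: "2 * (a \<bullet> b) / (b \<bullet> b) = of_int l" using int_R[OF b a] Ints_cases by metis
  have "2 * (b \<bullet> a) < 0" using neg by (simp add: inner_commute)
  hence "2 * (b \<bullet> a) / (a \<bullet> a) < 0" using pa by (simp add: divide_neg_pos)
  hence "of_int k < (0::real)" using k by simp
  hence k0: "k < 0" by simp
  have "2 * (a \<bullet> b) / (b \<bullet> b) < 0" using pa neg by (simp add: divide_neg_pos)
  hence "of_int l < (0::real)" using l by simp
  hence l0: "l < 0" by simp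
  have kk: "2 * (a \<bullet> b) / (a \<bullet> a) = of_int k" using k by (simp add: inner_commute)
  have "of_int k * of_int l = (2 * (a \<bullet> b) / (a \<bullet> a)) * (2 * (a \<bullet> b) / (b \<bullet> b))"
    by (simp only: kk l)
  hence "of_int k * of_int l < (4::real)" using prod_lt4[OF a b ba ne] by simp
  hence "k * l < 4" by (metis of_int_less_iff of_int_mult of_int_numeral)
  hence "k = -1 \<or> l = -1" using int_neg_prod k0 l0 by blast
  thus ?thesis
  proof
    assume "k = -1"
    thus ?thesis using refl_R[OF a b] k by (simp add: add.commute)
  next
    assume "l = -1"
    thus ?thesis using refl_R[OF b a] l by simp
  qed
qed

lemma diff_root:
  assumes a: "a \<in> R" and b: "b \<in> R" and p: "a \<bullet> b > 0" and ne: "a \<noteq> b"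
  shows "a - b \<in> R"
  using sum_root[OF a neg_R[OF b]] p ne by simp

end


context rsys begin

lemma pos_ne0: "pos x \<Longrightarrow> x \<noteq> 0" using zero_notin pos_def by auto

lemma pos_or_neg: "b \<in> R \<Longrightarrow> pos b \<or> pos (- b)"
  using root_sign[of b] neg_R[of b] by (auto simp: pos_def crd_minus)

lemma simple_inner_nonpos:
  assumes i: "i \<in> I" and j: "j \<in> I" and ij: "i \<noteq> j"
  shows "alpha i \<bullet> alpha j \<le> 0"
proof (rule ccontr)
  assume "\<not> alpha i \<bullet> alpha j \<le> 0"
  hence p: "alpha i \<bullet> alpha j > 0" by simp
  have "alpha i \<noteq> alpha j" using inj i j ij by (meson inj_on_contraD)
  hence r: "alpha i - alpha j \<in> R" using diff_root[OF alpha_R[OF i] alpha_R[OF j] p] by simp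
  have "crd (alpha i - alpha j) i = 1" "crd (alpha i - alpha j) j = -1"
    using i j ij by (auto simp: crd_diff crd_alpha)
  thus False using root_sign[OF r] i j by force
qed

lemma inner_double: "x \<bullet> y = (\<Sum>i\<in>I. \<Sum>j\<in>I. crd x i * crd y j * (alpha i \<bullet> alpha j))"
proof -
  have "x \<bullet> y = (\<Sum>i\<in>I. crd x i * (alpha i \<bullet> y))" by (rule inner_crd)
  also have "\<dots> = (\<Sum>i\<in>I. crd x i * (\<Sum>j\<in>I. crd y j * (alpha j \<bullet> alpha i)))"
    by (rule sum.cong) (simp_all add: inner_commute[of "alpha _" y] inner_crd[of y])
  also have "\<dots> = (\<Sum>i\<in>I. \<Sum>j\<in>I. crd x i * crd y j * (alpha i \<bullet> alpha j))"
    by (simp add: sum_distrib_left mult.assoc inner_commute)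
  finally show ?thesis .
qed

lemma no_mixed_pos:
  assumes ST: "S \<union> T = I" "S \<inter> T = {}"
    and orth: "\<And>s t. s \<in> S \<Longrightarrow> t \<in> T \<Longrightarrow> alpha s \<bullet> alpha t = 0"
  shows "pos b \<Longrightarrow> (\<forall>t\<in>T. crd b t = 0) \<or> (\<forall>s\<in>S. crd b s = 0)"
proof -
  have main: "\<forall>b. pos b \<and> ht b < of_nat k \<longrightarrow> (\<forall>t\<in>T. crd b t = 0) \<or> (\<forall>s\<in>S. crd b s = 0)" for k
  proof (induction k)
    case 0
    show ?case
    proof (intro allI impI)
      fix b assume h: "pos b \<and> ht b < of_nat 0"
      have "ht b \<ge> 0" unfolding ht_def by (rule sum_nonneg) (use h pos_def in auto)
      thus "(\<forall>t\<in>T. crd b t = 0) \<or> (\<forall>s\<in>S. crd b s = 0)" using h by simp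
    qed
  next
    case (Suc k)
    show ?case
    proof (intro allI impI, rule ccontr)
      fix b assume h: "pos b \<and> ht b < of_nat (Suc k)"
      assume "\<not> ((\<forall>t\<in>T. crd b t = 0) \<or> (\<forall>s\<in>S. crd b s = 0))"
      then obtain s0 t0 where s0: "s0 \<in> S" "crd b s0 \<noteq> 0" and t0: "t0 \<in> T" "crd b t0 \<noteq> 0" by auto
      have bR: "b \<in> R" and bnn: "\<forall>j\<in>I. crd b j \<ge> 0" using h pos_def by auto
      have t0I: "t0 \<in> I" using t0 ST by auto
      have s0I: "s0 \<in> I" using s0 ST by auto
      define bS where "bS = lin (\<lambda>j. if j \<in> S then crd b j else 0)"
      define bT where "bT = lin (\<lambda>j. if j \<in> T then crd b j else 0)"
      have cS: "crd bS j = (if j \<in> S then crd b j else 0)" if "j \<in> I" for j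
        using that by (simp add: bS_def crd_lin)
      have cT: "crd bT j = (if j \<in> T then crd b j else 0)" if "j \<in> I" for j
        using that by (simp add: bT_def crd_lin)
      have bsum: "b = bS + bT"
        by (rule vec_eqI) (use ST in \<open>auto simp: crd_add cS cT\<close>)
      have "bS \<bullet> bT = (\<Sum>i\<in>I. \<Sum>j\<in>I. crd bS i * crd bT j * (alpha i \<bullet> alpha j))"
        by (rule inner_double)
      also have "\<dots> = 0"
        by (rule sum.neutral, rule ballI, rule sum.neutral) (auto simp: cS cT orth)
      finally have o: "bS \<bullet> bT = 0" .
      have "bS \<noteq> 0" using cS[OF s0I] s0 crd_zero[OF s0I] by auto
      hence "bS \<bullet> bS > 0" by simp
      hence "bS \<bullet> b > 0" using o bsum by (simp add: inner_add_right)
      hence "(\<Sum>i\<in>I. crd bS i * (alpha i \<bullet> b)) > 0" using inner_crd[of bS b] by linarith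
      then obtain s where sI: "s \<in> I" and sp: "crd bS s * (alpha s \<bullet> b) > 0"
        using sum_nonpos[of I "\<lambda>i. crd bS i * (alpha i \<bullet> b)"] by (meson not_le)
      have sS: "s \<in> S" using sp cS[OF sI] by (auto split: if_splits)
      have cbs: "crd b s > 0" using sp cS[OF sI] sS bnn sI
        by (metis less_eq_real_def mult_not_zero)
      have ip: "b \<bullet> alpha s > 0" using sp cS[OF sI] sS cbs
        by (simp add: inner_commute zero_less_mult_iff)
      have st0: "s \<noteq> t0" using sS t0 ST by auto
      have "b \<noteq> alpha s" using t0 st0 crd_alpha[OF t0I sI] by auto
      hence cR: "b - alpha s \<in> R" using diff_root[OF bR alpha_R[OF sI] ip] by simp
      have ct0: "crd (b - alpha s) t0 > 0" using t0 t0I sI st0 bnn by (auto simp: crd_diff crd_alpha less_le)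
      have cpos: "pos (b - alpha s)" using root_sign[OF cR] ct0 t0I cR unfolding pos_def by fastforce
      have "ht (b - alpha s) < of_nat k" using h ht_diff ht_alpha[OF sI] by simp
      hence "(\<forall>t\<in>T. crd (b - alpha s) t = 0) \<or> (\<forall>s'\<in>S. crd (b - alpha s) s' = 0)"
        using Suc.IH[rule_format, of "b - alpha s"] cpos by blast
      hence cS0: "\<forall>s'\<in>S. crd (b - alpha s) s' = 0" using ct0 t0 by auto
      have "(b - alpha s) \<bullet> alpha s = (\<Sum>j\<in>I. crd (b - alpha s) j * (alpha j \<bullet> alpha s))"
        by (rule inner_crd)
      also have "\<dots> = 0"
      proof (rule sum.neutral, rule ballI)
        fix j assume jI: "j \<in> I"
        show "crd (b - alpha s) j * (alpha j \<bullet> alpha s) = 0"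
        proof (cases "j \<in> S")
          case True thus ?thesis using cS0 by simp
        next
          case False hence "j \<in> T" using jI ST by auto
          thus ?thesis using orth[OF sS] by (simp add: inner_commute)
        qed
      qed
      finally have "b \<bullet> alpha s = alpha s \<bullet> alpha s" by (simp add: inner_diff_left)
      hence e: "2 * (b \<bullet> alpha s) / (alpha s \<bullet> alpha s) = 2" using sq_pos[OF alpha_R[OF sI]] by simp
      have "b - (2 * (b \<bullet> alpha s) / (alpha s \<bullet> alpha s)) *\<^sub>R alpha s \<in> R"
        by (rule refl_R[OF alpha_R[OF sI] bR])
      hence rR: "b - 2 *\<^sub>R alpha s \<in> R" by (simp only: e)
      have "crd (b - 2 *\<^sub>R alpha s) s = crd b s - 2" using sI by (simp add: crd_diff crd_scale crd_alpha)
      moreover have "crd b s = 1"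
      proof -
        have "crd (b - alpha s) s = 0" using cS0 sS by blast
        thus ?thesis using sI by (simp add: crd_diff crd_alpha)
      qed
      moreover have "crd (b - 2 *\<^sub>R alpha s) t0 > 0" using t0I sI st0 t0 bnn
        by (auto simp: crd_diff crd_scale crd_alpha less_le)
      ultimately show False using root_sign[OF rR] sI t0I by force
    qed
  qed
  assume "pos b"
  moreover have "ht b < of_nat (nat \<lceil>ht b\<rceil> + 1)" by linarith
  ultimately show ?thesis using main by blast
qed

lemma no_mixed:
  assumes ST: "S \<union> T = I" "S \<inter> T = {}"
    and orth: "\<And>s t. s \<in> S \<Longrightarrow> t \<in> T \<Longrightarrow> alpha s \<bullet> alpha t = 0"
    and b: "b \<in> R"
  shows "(\<forall>t\<in>T. crd b t = 0) \<or> (\<forall>s\<in>S. crd b s = 0)"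
proof (cases "pos b")
  case True thus ?thesis using no_mixed_pos[OF ST orth] by blast
next
  case False hence "pos (- b)" using pos_or_neg[OF b] by blast
  hence *: "(\<forall>t\<in>T. crd (-b) t = 0) \<or> (\<forall>s\<in>S. crd (-b) s = 0)" using no_mixed_pos[OF ST orth] by blast
  have m: "\<And>j. j \<in> S \<union> T \<Longrightarrow> crd b j = - crd (-b) j" using ST by (simp add: crd_minus)
  from * show ?thesis using m by auto
qed

lemma dom_full:
  assumes irr: "irreducible_root_system R" and th: "pos th"
    and dom: "\<forall>i\<in>I. th \<bullet> alpha i \<ge> 0"
  shows "\<forall>j\<in>I. crd th j > 0"
proof (rule ccontr)
  assume "\<not> (\<forall>j\<in>I. crd th j > 0)"
  then obtain j0 where j0: "j0 \<in> I" "crd th j0 = 0" using th unfolding pos_def by force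
  define S where "S = {j\<in>I. crd th j > 0}"
  define T where "T = I - S"
  have ST: "S \<union> T = I" "S \<inter> T = {}" unfolding S_def T_def by auto
  have j0T: "j0 \<in> T" using j0 unfolding T_def S_def by auto
  obtain s0 where s0: "s0 \<in> I" "crd th s0 \<noteq> 0" using pos_ne0[OF th] vec_eqI[of th 0] crd_zero by auto
  have s0S: "s0 \<in> S" using s0 th unfolding S_def pos_def by (auto simp: less_le)
  have orth: "alpha s \<bullet> alpha t = 0" if s: "s \<in> S" and t: "t \<in> T" for s t
  proof -
    have tI: "t \<in> I" and sI: "s \<in> I" using s t ST by auto
    have terms: "crd th i * (alpha i \<bullet> alpha t) \<le> 0" if iI: "i \<in> I" for i
    proof (cases "i \<in> S")
      case True
      hence "i \<noteq> t" using t ST by auto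
      hence "alpha i \<bullet> alpha t \<le> 0" using simple_inner_nonpos iI tI by blast
      moreover have "crd th i > 0" using True S_def by auto
      ultimately show ?thesis by (simp add: mult_nonneg_nonpos less_imp_le)
    next
      case False hence "crd th i = 0" using th iI unfolding S_def pos_def by (auto simp: less_le)
      thus ?thesis by simp
    qed
    have "th \<bullet> alpha t = (\<Sum>i\<in>I. crd th i * (alpha i \<bullet> alpha t))" by (rule inner_crd)
    moreover have "th \<bullet> alpha t \<ge> 0" using dom tI by blast
    moreover have "(\<Sum>i\<in>I. crd th i * (alpha i \<bullet> alpha t)) \<le> 0"
      using sum_nonpos[of I "\<lambda>i. crd th i * (alpha i \<bullet> alpha t)"] terms by blast
    ultimately have "(\<Sum>i\<in>I. crd th i * (alpha i \<bullet> alpha t)) = 0" by linarith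
    hence "(\<Sum>i\<in>I. - (crd th i * (alpha i \<bullet> alpha t))) = 0"
      by (simp add: sum_negf)
    hence "\<forall>i\<in>I. - (crd th i * (alpha i \<bullet> alpha t)) = 0"
      using sum_nonneg_eq_0_iff[of I "\<lambda>i. - (crd th i * (alpha i \<bullet> alpha t))"] terms by simp
    hence "crd th s * (alpha s \<bullet> alpha t) = 0" using sI by simp
    moreover have "crd th s > 0" using s S_def by auto
    ultimately show ?thesis by simp
  qed
  define R1 where "R1 = {b\<in>R. \<forall>t\<in>T. crd b t = 0}"
  define R2 where "R2 = R - R1"
  have "R = R1 \<union> R2" unfolding R1_def R2_def by auto
  moreover have "alpha s0 \<in> R1"
  proof -
    have "\<forall>t\<in>T. crd (alpha s0) t = 0"
    proof
      fix t assume t: "t \<in> T"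
      hence tI: "t \<in> I" and ts: "t \<noteq> s0" using ST s0S by auto
      thus "crd (alpha s0) t = 0" using crd_alpha[OF tI s0(1)] by simp
    qed
    thus ?thesis unfolding R1_def using alpha_R[OF s0(1)] by blast
  qed
  moreover have "alpha j0 \<in> R2"
  proof -
    have "crd (alpha j0) j0 = 1" using crd_alpha[OF j0(1) j0(1)] by simp
    thus ?thesis unfolding R1_def R2_def using j0T alpha_R[OF j0(1)] by force
  qed
  moreover have "\<forall>a\<in>R1. \<forall>b\<in>R2. a \<bullet> b = 0"
  proof (intro ballI)
    fix a b assume a: "a \<in> R1" and b: "b \<in> R2"
    have bR: "b \<in> R" and "\<not> (\<forall>t\<in>T. crd b t = 0)" using b unfolding R2_def R1_def by auto
    hence bS: "\<forall>s\<in>S. crd b s = 0" using no_mixed[OF ST orth bR] by blast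
    have aT: "\<forall>t\<in>T. crd a t = 0" using a R1_def by auto
    have "a \<bullet> b = (\<Sum>i\<in>I. \<Sum>j\<in>I. crd a i * crd b j * (alpha i \<bullet> alpha j))" by (rule inner_double)
    also have "\<dots> = 0"
    proof (rule sum.neutral, rule ballI, rule sum.neutral, rule ballI)
      fix i j assume i: "i \<in> I" and j: "j \<in> I"
      show "crd a i * crd b j * (alpha i \<bullet> alpha j) = 0"
      proof (cases "i \<in> S")
        case False thus ?thesis using aT i ST by auto
      next
        case True
        show ?thesis
        proof (cases "j \<in> S")
          case True thus ?thesis using bS by simp
        next
          case False hence "j \<in> T" using j ST by auto
          thus ?thesis using orth \<open>i \<in> S\<close> by simp
        qed
      qed
    qed
    finally show "a \<bullet> b = 0" .
  qed
  ultimately show False using irr unfolding irreducible_root_system_def by blast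
qed

lemma maximal_dom:
  assumes m: "pos m" and mx: "\<And>x. pos x \<Longrightarrow> (\<forall>j\<in>I. crd m j \<le> crd x j) \<Longrightarrow> ht x \<le> ht m"
  shows "\<forall>i\<in>I. m \<bullet> alpha i \<ge> 0"
proof (intro ballI, rule ccontr)
  fix i assume i: "i \<in> I" and "\<not> m \<bullet> alpha i \<ge> 0"
  hence neg: "m \<bullet> alpha i < 0" by simp
  have mR: "m \<in> R" using m pos_def by auto
  have "alpha i \<noteq> - m"
  proof
    assume "alpha i = - m"
    hence "m = - alpha i" by simp
    hence "crd m i = - 1" using i by (simp add: crd_minus crd_alpha)
    thus False using m i unfolding pos_def by force
  qed
  hence sR: "m + alpha i \<in> R" using sum_root[OF mR alpha_R[OF i] neg] by blast
  have "pos (m + alpha i)" using sR m i unfolding pos_def by (auto simp: crd_add crd_alpha)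
  moreover have "\<forall>j\<in>I. crd m j \<le> crd (m + alpha i) j" using i by (auto simp: crd_add crd_alpha)
  ultimately have "ht (m + alpha i) \<le> ht m" using mx by blast
  thus False using ht_add ht_alpha[OF i] by simp
qed

lemma argmax_ht:
  assumes "finite X" "X \<noteq> {}" obtains m where "m \<in> X" "\<And>x. x \<in> X \<Longrightarrow> ht x \<le> ht m"
proof -
  have "Max (ht ` X) \<in> ht ` X" using assms by simp
  then obtain m where "m \<in> X" "ht m = Max (ht ` X)" by auto
  thus thesis using that assms by simp
qed

lemma highest_ex:
  assumes irr: "irreducible_root_system R"
  shows "\<exists>th. pos th \<and> (\<forall>b. pos b \<longrightarrow> (\<forall>j\<in>I. crd b j \<le> crd th j))"
proof -
  have "n \<ge> 1" using n_def by simp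
  hence oneI: "1 \<in> I" by simp
  have "pos (alpha 1)" using alpha_R[OF oneI] oneI unfolding pos_def by (auto simp: crd_alpha)
  hence P: "finite {x\<in>R. pos x}" "{x\<in>R. pos x} \<noteq> {}" using fin by (auto simp: pos_def)
  obtain th where th: "th \<in> {x\<in>R. pos x}" and thmax: "\<And>x. x \<in> {x\<in>R. pos x} \<Longrightarrow> ht x \<le> ht th"
    using argmax_ht[OF P] by blast
  have thp: "pos th" using th by simp
  have thdom: "\<forall>i\<in>I. th \<bullet> alpha i \<ge> 0"
    by (rule maximal_dom[OF thp]) (use thmax pos_def in auto)
  have thfull: "\<forall>j\<in>I. crd th j > 0" using dom_full[OF irr thp thdom] .
  have thR: "th \<in> R" using thp pos_def by auto
  have "th \<bullet> th > 0" using sq_pos[OF thR] .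
  hence "(\<Sum>j\<in>I. crd th j * (alpha j \<bullet> th)) > 0" using inner_crd[of th th] by linarith
  then obtain j0 where j0: "j0 \<in> I" "crd th j0 * (alpha j0 \<bullet> th) > 0"
    using sum_nonpos[of I "\<lambda>j. crd th j * (alpha j \<bullet> th)"] by (meson not_le)
  have "crd th j0 > 0" using thfull j0(1) by blast
  hence aj0: "alpha j0 \<bullet> th > 0" using j0(2) by (simp add: zero_less_mult_iff)
  have "\<forall>j\<in>I. crd b j \<le> crd th j" if b: "pos b" for b
  proof -
    let ?X = "{x\<in>R. pos x \<and> (\<forall>j\<in>I. crd b j \<le> crd x j)}"
    have X: "finite ?X" "?X \<noteq> {}" using fin b pos_def by auto
    obtain m where m: "m \<in> ?X" and mm: "\<And>x. x \<in> ?X \<Longrightarrow> ht x \<le> ht m"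
      using argmax_ht[OF X] by blast
    have mp: "pos m" and mR: "m \<in> R" and bm: "\<forall>j\<in>I. crd b j \<le> crd m j" using m by auto
    have mdom: "\<forall>i\<in>I. m \<bullet> alpha i \<ge> 0"
    proof (rule maximal_dom[OF mp])
      fix x assume "pos x" "\<forall>j\<in>I. crd m j \<le> crd x j"
      hence "x \<in> ?X" using bm pos_def by force
      thus "ht x \<le> ht m" by (rule mm)
    qed
    have mfull: "\<forall>j\<in>I. crd m j > 0" using dom_full[OF irr mp mdom] .
    have "m = th"
    proof (rule ccontr)
      assume ne: "m \<noteq> th"
      have "th \<bullet> m = m \<bullet> th" by (rule inner_commute)
      also have "\<dots> = (\<Sum>j\<in>I. crd m j * (alpha j \<bullet> th))" by (rule inner_crd)
      also have "\<dots> \<ge> crd m j0 * (alpha j0 \<bullet> th)"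
        by (rule member_le_sum) (use j0 mfull thdom in \<open>auto simp: inner_commute less_imp_le\<close>)
      finally have "th \<bullet> m > 0" using mfull j0 aj0 by (smt (verit) mult_pos_pos)
      hence dR: "th - m \<in> R" using diff_root[OF thR mR] ne by auto
      show False
      proof (cases "\<forall>j\<in>I. crd (th - m) j \<ge> 0")
        case True
        have "th - m \<noteq> 0" using ne by simp
        hence "ht (th - m) > 0" using ht_pos True by blast
        moreover have "th \<in> ?X" using thR thp bm True by (force simp: crd_diff)
        ultimately show False using mm ht_diff by fastforce
      next
        case False
        hence le: "\<forall>j\<in>I. crd (m - th) j \<ge> 0" using root_sign[OF dR] by (auto simp: crd_diff)
        have "m - th \<noteq> 0" using ne by simp
        hence "ht (m - th) > 0" using ht_pos le by blast
        moreover have "ht m \<le> ht th" using thmax mp mR by simp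
        ultimately show False using ht_diff by fastforce
      qed
    qed
    thus ?thesis using bm by simp
  qed
  thus ?thesis using thp by blast
qed

lemma highest_root_props:
  assumes irr: "irreducible_root_system R"
  shows "pos (highest_root R n alpha) \<and>
    (\<forall>b. pos b \<longrightarrow> (\<forall>j\<in>I. crd b j \<le> crd (highest_root R n alpha) j))"
proof -
  obtain th where thp: "pos th" and thmax: "\<forall>b. pos b \<longrightarrow> (\<forall>j\<in>I. crd b j \<le> crd th j)"
    using highest_ex[OF irr] by blast
  have thR: "th \<in> R" using thp pos_def by auto
  have "highest_root R n alpha = th"
    unfolding highest_root_def
  proof (rule the_equality)
    show "th \<in> pos_roots R n alpha \<and> (\<forall>b\<in>pos_roots R n alpha. rle n alpha b th)"
      using thp thmax latt_root thR by (auto simp: pos_roots_iff rle_iff pos_def)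
  next
    fix t assume t: "t \<in> pos_roots R n alpha \<and> (\<forall>b\<in>pos_roots R n alpha. rle n alpha b t)"
    hence tp: "pos t" by (simp add: pos_roots_iff)
    hence tR: "t \<in> R" using pos_def by auto
    have "rle n alpha th t" using t thp by (simp add: pos_roots_iff)
    hence "\<forall>j\<in>I. crd th j \<le> crd t j" using rle_iff latt_root thR tR by blast
    moreover have "\<forall>j\<in>I. crd t j \<le> crd th j" using thmax tp by blast
    ultimately show "t = th" by (intro vec_eqI) (simp add: order_antisym)
  qed
  thus ?thesis using thp thmax by simp
qed

end


context rsys begin

lemma half_lemma:
  assumes thR: "th \<in> R" and bR: "b \<in> R" and ge: "th \<bullet> b \<ge> b \<bullet> b"
    and ne: "b \<noteq> th" "b \<noteq> - th"
  shows "2 * (th \<bullet> b) = th \<bullet> th"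
proof -
  have pb: "b \<bullet> b > 0" and pt: "th \<bullet> th > 0" using sq_pos thR bR by auto
  have tb: "th \<bullet> b > 0" using ge pb by linarith
  obtain k where k: "2 * (b \<bullet> th) / (th \<bullet> th) = of_int k" using int_R[OF thR bR] Ints_cases by metis
  have kk: "2 * (th \<bullet> b) / (th \<bullet> th) = of_int k" using k by (simp add: inner_commute)
  have q: "2 * (th \<bullet> b) / (b \<bullet> b) \<ge> 2" using ge pb by (simp add: le_divide_eq)
  have p0: "2 * (th \<bullet> b) / (th \<bullet> th) > 0" using tb pt by simp
  have lt: "(2 * (th \<bullet> b) / (th \<bullet> th)) * (2 * (th \<bullet> b) / (b \<bullet> b)) < 4"
    using prod_lt4[OF thR bR ne] .
  have "(2 * (th \<bullet> b) / (th \<bullet> th)) * 2 \<le> (2 * (th \<bullet> b) / (th \<bullet> th)) * (2 * (th \<bullet> b) / (b \<bullet> b))"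
    by (rule mult_left_mono[OF q]) (use p0 in linarith)
  hence "of_int k * 2 < (4::real)" using lt kk by simp
  hence "k < 2" by linarith
  moreover have "k > 0" using p0 kk by simp
  ultimately have "k = 1" by simp
  hence e: "2 * (th \<bullet> b) / (th \<bullet> th) = 1" by (simp only: kk)
  show ?thesis using divide_eq_1_iff[THEN iffD1, OF e] by (rule conjunct2)
qed

lemma pos_not_neg: "pos x \<Longrightarrow> pos y \<Longrightarrow> x \<noteq> - y"
proof
  assume x: "pos x" and y: "pos y" and e: "x = - y"
  have "\<forall>j\<in>I. crd x j = 0" using x y e unfolding pos_def by (force simp: crd_minus)
  hence "x = 0" using vec_eqI[of x 0] crd_zero by auto
  thus False using pos_ne0 x by blast
qed

lemma pos_plus_alpha:
  assumes b: "pos b" and i: "i \<in> I" and neg: "b \<bullet> alpha i < 0"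
  shows "pos (b + alpha i)"
proof -
  have bR: "b \<in> R" using b pos_def by auto
  have "alpha i \<noteq> - b" using pos_not_neg[of "alpha i" b] b i alpha_R[OF i]
    by (auto simp: pos_def crd_alpha)
  hence "b + alpha i \<in> R" using sum_root[OF bR alpha_R[OF i] neg] by blast
  thus ?thesis using b i unfolding pos_def by (auto simp: crd_add crd_alpha)
qed

lemma G:
  assumes irr: "irreducible_root_system R" and a: "pos a" and b: "pos b"
    and le: "\<forall>j\<in>I. crd a j + crd b j \<le> crd (highest_root R n alpha) j"
  shows "\<exists>b1 b2. pos b1 \<and> pos b2 \<and> (\<forall>j\<in>I. crd a j \<le> crd b1 j) \<and> (\<forall>j\<in>I. crd b j \<le> crd b2 j)
     \<and> b1 + b2 \<in> R"
proof -
  define th where "th = highest_root R n alpha"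
  have thp: "pos th" and thmax: "\<forall>b. pos b \<longrightarrow> (\<forall>j\<in>I. crd b j \<le> crd th j)"
    using highest_root_props[OF irr] th_def by auto
  have thR: "th \<in> R" using thp pos_def by auto
  let ?G = "\<exists>b1 b2. pos b1 \<and> pos b2 \<and> (\<forall>j\<in>I. crd a j \<le> crd b1 j) \<and> (\<forall>j\<in>I. crd b j \<le> crd b2 j)
     \<and> b1 + b2 \<in> R"
  have main: "\<forall>b1 b2. pos b1 \<and> pos b2 \<and> (\<forall>j\<in>I. crd a j \<le> crd b1 j) \<and> (\<forall>j\<in>I. crd b j \<le> crd b2 j)
     \<and> (\<forall>j\<in>I. crd b1 j + crd b2 j \<le> crd th j) \<and> ht (th - b1 - b2) < of_nat k \<longrightarrow> ?G" for k
  proof (induction k)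
    case 0
    show ?case
    proof (intro allI impI)
      fix b1 b2 assume h: "pos b1 \<and> pos b2 \<and> (\<forall>j\<in>I. crd a j \<le> crd b1 j) \<and> (\<forall>j\<in>I. crd b j \<le> crd b2 j)
        \<and> (\<forall>j\<in>I. crd b1 j + crd b2 j \<le> crd th j) \<and> ht (th - b1 - b2) < of_nat 0"
      have "ht (th - b1 - b2) \<ge> 0" unfolding ht_def
      proof (rule sum_nonneg)
        fix j assume j: "j \<in> I"
        have "crd b1 j + crd b2 j \<le> crd th j" using h j by blast
        thus "crd (th - b1 - b2) j \<ge> 0" using j by (simp add: crd_diff)
      qed
      thus ?G using h by simp
    qed
  next
    case (Suc k)
    show ?case
    proof (intro allI impI)
      fix b1 b2 assume h: "pos b1 \<and> pos b2 \<and> (\<forall>j\<in>I. crd a j \<le> crd b1 j) \<and> (\<forall>j\<in>I. crd b j \<le> crd b2 j)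
        \<and> (\<forall>j\<in>I. crd b1 j + crd b2 j \<le> crd th j) \<and> ht (th - b1 - b2) < of_nat (Suc k)"
      have p1: "pos b1" and p2: "pos b2" and ab1: "\<forall>j\<in>I. crd a j \<le> crd b1 j"
        and bb2: "\<forall>j\<in>I. crd b j \<le> crd b2 j" and sle: "\<forall>j\<in>I. crd b1 j + crd b2 j \<le> crd th j"
        and hlt: "ht (th - b1 - b2) < of_nat (Suc k)" using h by auto
      have b1R: "b1 \<in> R" and b2R: "b2 \<in> R" using p1 p2 pos_def by auto
      define g where "g = th - b1 - b2"
      have cg: "crd g j = crd th j - crd b1 j - crd b2 j" if "j \<in> I" for j
        using that by (simp add: g_def crd_diff)
      have gnn: "\<forall>j\<in>I. crd g j \<ge> 0" using sle cg by auto
      have glatt: "latt g" unfolding g_def using latt_root thR b1R b2R latt_diff by blast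
      have g1: "crd g i \<ge> 1" if "i \<in> I" "crd g i > 0" for i
      proof -
        have "crd g i \<in> \<int>" using glatt that unfolding latt_def by blast
        then obtain z where "crd g i = of_int z" by (auto elim: Ints_cases)
        thus ?thesis using that by simp
      qed
      show ?G
      proof (cases "b1 + b2 \<in> R")
        case True thus ?thesis using p1 p2 ab1 bb2 by blast
      next
        case notR: False
        show ?thesis
        proof (cases "\<exists>i\<in>I. crd g i > 0 \<and> b1 \<bullet> alpha i < 0")
          case True
          then obtain i where i: "i \<in> I" "crd g i > 0" "b1 \<bullet> alpha i < 0" by blast
          have "pos (b1 + alpha i)" using pos_plus_alpha[OF p1 i(1) i(3)] .
          moreover have "\<forall>j\<in>I. crd a j \<le> crd (b1 + alpha i) j"
          proof
            fix j assume j: "j \<in> I"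
            have "crd a j \<le> crd b1 j" using ab1 j by blast
            thus "crd a j \<le> crd (b1 + alpha i) j" using i(1) j by (simp add: crd_add crd_alpha)
          qed
          moreover have "\<forall>j\<in>I. crd (b1 + alpha i) j + crd b2 j \<le> crd th j"
          proof
            fix j assume j: "j \<in> I"
            have "crd b1 j + crd b2 j \<le> crd th j" using sle j by blast
            moreover have "j = i \<Longrightarrow> crd b1 j + crd b2 j + 1 \<le> crd th j"
              using g1[OF i(1,2)] cg[OF i(1)] by simp
            ultimately show "crd (b1 + alpha i) j + crd b2 j \<le> crd th j"
              using i(1) j by (auto simp: crd_add crd_alpha)
          qed
          moreover have "ht (th - (b1 + alpha i) - b2) < of_nat k"
            using hlt ht_alpha[OF i(1)] by (simp add: ht_diff ht_add)
          ultimately show ?G using Suc.IH p2 bb2 by blast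
        next
          case F1: False
          show ?thesis
          proof (cases "\<exists>i\<in>I. crd g i > 0 \<and> b2 \<bullet> alpha i < 0")
            case True
            then obtain i where i: "i \<in> I" "crd g i > 0" "b2 \<bullet> alpha i < 0" by blast
            have "pos (b2 + alpha i)" using pos_plus_alpha[OF p2 i(1) i(3)] .
            moreover have "\<forall>j\<in>I. crd b j \<le> crd (b2 + alpha i) j"
            proof
              fix j assume j: "j \<in> I"
              have "crd b j \<le> crd b2 j" using bb2 j by blast
              thus "crd b j \<le> crd (b2 + alpha i) j" using i(1) j by (simp add: crd_add crd_alpha)
            qed
            moreover have "\<forall>j\<in>I. crd b1 j + crd (b2 + alpha i) j \<le> crd th j"
            proof
              fix j assume j: "j \<in> I"
              have "crd b1 j + crd b2 j \<le> crd th j" using sle j by blast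
              moreover have "j = i \<Longrightarrow> crd b1 j + crd b2 j + 1 \<le> crd th j"
                using g1[OF i(1,2)] cg[OF i(1)] by simp
              ultimately show "crd b1 j + crd (b2 + alpha i) j \<le> crd th j"
                using i(1) j by (auto simp: crd_add crd_alpha)
            qed
            moreover have "ht (th - b1 - (b2 + alpha i)) < of_nat k"
              using hlt ht_alpha[OF i(1)] by (simp add: ht_diff ht_add)
            ultimately show ?G using Suc.IH p1 ab1 by blast
          next
            case F2: False
            have i1: "\<forall>i\<in>I. crd g i * (alpha i \<bullet> b1) \<ge> 0"
            proof
              fix i assume i: "i \<in> I"
              show "crd g i * (alpha i \<bullet> b1) \<ge> 0"
              proof (cases "crd g i > 0")
                case True thus ?thesis using F1 i by (auto simp: inner_commute)
              next
                case False hence "crd g i = 0" using gnn i by force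
                thus ?thesis by simp
              qed
            qed
            have i2: "\<forall>i\<in>I. crd g i * (alpha i \<bullet> b2) \<ge> 0"
            proof
              fix i assume i: "i \<in> I"
              show "crd g i * (alpha i \<bullet> b2) \<ge> 0"
              proof (cases "crd g i > 0")
                case True thus ?thesis using F2 i by (auto simp: inner_commute)
              next
                case False hence "crd g i = 0" using gnn i by force
                thus ?thesis by simp
              qed
            qed
            have gb1: "g \<bullet> b1 \<ge> 0" unfolding inner_crd[of g] by (rule sum_nonneg) (use i1 in blast)
            have gb2: "g \<bullet> b2 \<ge> 0" unfolding inner_crd[of g] by (rule sum_nonneg) (use i2 in blast)
            have b12: "b1 \<bullet> b2 \<ge> 0"
            proof (rule ccontr)
              assume "\<not> b1 \<bullet> b2 \<ge> 0"
              hence "b1 \<bullet> b2 < 0" by simp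
              hence "b1 + b2 \<in> R" using sum_root[OF b1R b2R] pos_not_neg[OF p2 p1] by blast
              thus False using notR by simp
            qed
            have gne: "g \<noteq> 0"
            proof
              assume "g = 0" hence "b1 + b2 = th" unfolding g_def by (simp add: algebra_simps)
              thus False using notR thR by simp
            qed
            have thsum: "th = b1 + b2 + g" unfolding g_def by simp
            have e1: "th \<bullet> b1 = b1 \<bullet> b1 + b1 \<bullet> b2 + g \<bullet> b1"
              by (simp add: thsum inner_add_left inner_add_right inner_commute)
            have e2: "th \<bullet> b2 = b2 \<bullet> b2 + b1 \<bullet> b2 + g \<bullet> b2"
              by (simp add: thsum inner_add_left inner_add_right inner_commute)
            have pb1: "b1 \<bullet> b1 > 0" and pb2: "b2 \<bullet> b2 > 0" using sq_pos b1R b2R by auto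
            have ne1: "b1 \<noteq> th"
            proof
              assume "b1 = th"
              hence "b2 + g = 0" using thsum by (simp add: algebra_simps)
              hence "\<forall>j\<in>I. crd b2 j + crd g j = 0" using crd_add crd_zero by metis
              hence "\<forall>j\<in>I. crd b2 j = 0" using gnn p2 unfolding pos_def by (metis add_nonneg_eq_0_iff)
              hence "b2 = 0" using vec_eqI[of b2 0] crd_zero by auto
              thus False using pos_ne0[OF p2] by simp
            qed
            have ne2: "b2 \<noteq> th"
            proof
              assume "b2 = th"
              hence "b1 + g = 0" using thsum by (simp add: algebra_simps)
              hence "\<forall>j\<in>I. crd b1 j + crd g j = 0" using crd_add crd_zero by metis
              hence "\<forall>j\<in>I. crd b1 j = 0" using gnn p1 unfolding pos_def by (metis add_nonneg_eq_0_iff)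
              hence "b1 = 0" using vec_eqI[of b1 0] crd_zero by auto
              thus False using pos_ne0[OF p1] by simp
            qed
            have h1: "2 * (th \<bullet> b1) = th \<bullet> th"
              using half_lemma[OF thR b1R] e1 b12 gb1 ne1 pos_not_neg[OF p1 thp] by simp
            have h2: "2 * (th \<bullet> b2) = th \<bullet> th"
              using half_lemma[OF thR b2R] e2 b12 gb2 ne2 pos_not_neg[OF p2 thp] by simp
            have "th \<bullet> th = th \<bullet> b1 + th \<bullet> b2 + th \<bullet> g"
              by (subst (2) thsum) (simp add: inner_add_right)
            hence z: "th \<bullet> g = 0" using h1 h2 by simp
            have "th \<bullet> g = b1 \<bullet> g + b2 \<bullet> g + g \<bullet> g" by (simp add: thsum inner_add_left)
            moreover have "g \<bullet> g > 0" using gne by simp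
            moreover have "b1 \<bullet> g = g \<bullet> b1" "b2 \<bullet> g = g \<bullet> b2" by (simp_all add: inner_commute)
            ultimately have False using z gb1 gb2 by linarith
            thus ?thesis by blast
          qed
        qed
      qed
    qed
  qed
  have "pos a \<and> pos b \<and> (\<forall>j\<in>I. crd a j \<le> crd a j) \<and> (\<forall>j\<in>I. crd b j \<le> crd b j)
     \<and> (\<forall>j\<in>I. crd a j + crd b j \<le> crd th j)" using a b le th_def by simp
  moreover have "ht (th - a - b) < of_nat (nat \<lceil>ht (th - a - b)\<rceil> + 1)" by linarith
  ultimately show ?thesis using main by blast
qed

end


theorem proposition1p6:
  fixes R :: "'a::euclidean_space set" and alpha :: "nat \<Rightarrow> 'a"
    and n :: nat and J :: "nat set" and A :: "'a set"
  assumes "n = DIM('a)"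
    and "irreducible_root_system R"
    and "simple_roots R n alpha"
    and "J \<subseteq> {1..n}"
    and "J_antichain R n alpha J A"
  shows "abelian_J_antichain R n alpha J A \<longleftrightarrow>
    ((\<forall>a\<in>A. \<forall>b\<in>A. a \<noteq> b \<longrightarrow>
        (\<exists>i\<in>{1..n}. dcoef n alpha i a + dcoef n alpha i b > dcoef n alpha i (highest_root R n alpha))) \<and>
     (\<forall>a\<in>A. \<exists>i\<in>{1..n}. 2 * dcoef n alpha i a > dcoef n alpha i (highest_root R n alpha)))"
proof -
  interpret rsys R alpha n
    using assms(1-3) by (unfold_locales) (auto simp: irreducible_root_system_def)
  define th where "th = highest_root R n alpha"
  have thp: "pos th" and thmax: "\<And>b. pos b \<Longrightarrow> \<forall>j\<in>I. crd b j \<le> crd th j"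
    using highest_root_props[OF assms(2)] th_def by auto
  have thl: "latt th" using thp latt_root pos_def by auto
  have Apos: "\<And>a. a \<in> A \<Longrightarrow> pos a"
    using assms(5) unfolding J_antichain_def by (auto simp: pos_roots_iff)
  have dA: "\<And>a i. a \<in> A \<Longrightarrow> i \<in> I \<Longrightarrow> real_of_int (dcoef n alpha i a) = crd a i"
    using Apos dcoef_crd latt_root pos_def by blast
  have dth: "\<And>i. i \<in> I \<Longrightarrow> real_of_int (dcoef n alpha i th) = crd th i"
    using dcoef_crd thl by blast
  have key: "(\<exists>i\<in>I. dcoef n alpha i a + dcoef n alpha i b > dcoef n alpha i th) \<longleftrightarrow>
             \<not> (\<forall>i\<in>I. crd a i + crd b i \<le> crd th i)" if "a \<in> A" "b \<in> A" for a b
  proof -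
    have "(dcoef n alpha i a + dcoef n alpha i b > dcoef n alpha i th) \<longleftrightarrow> crd a i + crd b i > crd th i"
      if i: "i \<in> I" for i
    proof -
      have "(dcoef n alpha i a + dcoef n alpha i b > dcoef n alpha i th) \<longleftrightarrow>
        real_of_int (dcoef n alpha i a + dcoef n alpha i b) > real_of_int (dcoef n alpha i th)"
        by (simp only: of_int_less_iff)
      also have "\<dots> \<longleftrightarrow> crd a i + crd b i > crd th i" using dA[OF \<open>a \<in> A\<close> i] dA[OF \<open>b \<in> A\<close> i] dth[OF i]
        by simp
      finally show ?thesis .
    qed
    thus ?thesis by (auto simp: not_le)
  qed
  have key2: "(\<exists>i\<in>I. 2 * dcoef n alpha i a > dcoef n alpha i th) \<longleftrightarrow>
             \<not> (\<forall>i\<in>I. crd a i + crd a i \<le> crd th i)" if "a \<in> A" for a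
    using key[OF that that] by (simp only: mult_2)
  have upc: "b1 \<in> upper_closure R n alpha A \<longleftrightarrow> pos b1 \<and> (\<exists>a\<in>A. \<forall>j\<in>I. crd a j \<le> crd b1 j)" for b1
    unfolding upper_closure_def pos_roots_iff using rle_iff latt_root Apos pos_def by blast
  show ?thesis
    unfolding th_def[symmetric]
  proof
    assume ab: "abelian_J_antichain R n alpha J A"
    hence nab: "\<And>b1 b2. b1 \<in> upper_closure R n alpha A \<Longrightarrow> b2 \<in> upper_closure R n alpha A \<Longrightarrow> b1 + b2 \<notin> R"
      unfolding abelian_J_antichain_def by blast
    have noG: "\<not> (\<forall>i\<in>I. crd a i + crd b i \<le> crd th i)" if abA: "a \<in> A" "b \<in> A" for a b
    proof
      assume "\<forall>i\<in>I. crd a i + crd b i \<le> crd th i"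
      then obtain b1 b2 where "pos b1" "pos b2" "\<forall>j\<in>I. crd a j \<le> crd b1 j" "\<forall>j\<in>I. crd b j \<le> crd b2 j"
        "b1 + b2 \<in> R" using G[OF assms(2) Apos[OF abA(1)] Apos[OF abA(2)]] th_def by blast
      thus False using nab upc abA by blast
    qed
    show "(\<forall>a\<in>A. \<forall>b\<in>A. a \<noteq> b \<longrightarrow> (\<exists>i\<in>I. dcoef n alpha i a + dcoef n alpha i b > dcoef n alpha i th)) \<and>
      (\<forall>a\<in>A. \<exists>i\<in>I. 2 * dcoef n alpha i a > dcoef n alpha i th)"
      using noG key key2 by blast
  next
    assume h: "(\<forall>a\<in>A. \<forall>b\<in>A. a \<noteq> b \<longrightarrow> (\<exists>i\<in>I. dcoef n alpha i a + dcoef n alpha i b > dcoef n alpha i th)) \<and>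
      (\<forall>a\<in>A. \<exists>i\<in>I. 2 * dcoef n alpha i a > dcoef n alpha i th)"
    have ok: "\<not> (\<forall>i\<in>I. crd a i + crd b i \<le> crd th i)" if "a \<in> A" "b \<in> A" for a b
    proof (cases "a = b")
      case True thus ?thesis using h key2 that by blast
    next
      case False thus ?thesis using h key that by blast
    qed
    have "b1 + b2 \<notin> R" if b1: "b1 \<in> upper_closure R n alpha A" and b2: "b2 \<in> upper_closure R n alpha A" for b1 b2
    proof
      assume sR: "b1 + b2 \<in> R"
      obtain a1 where a1: "a1 \<in> A" "\<forall>j\<in>I. crd a1 j \<le> crd b1 j" "pos b1" using b1 upc by blast
      obtain a2 where a2: "a2 \<in> A" "\<forall>j\<in>I. crd a2 j \<le> crd b2 j" "pos b2" using b2 upc by blast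
      have "pos (b1 + b2)" using sR a1(3) a2(3) unfolding pos_def by (auto simp: crd_add)
      hence "\<forall>j\<in>I. crd (b1 + b2) j \<le> crd th j" using thmax by blast
      hence "\<forall>i\<in>I. crd a1 i + crd a2 i \<le> crd th i" using a1(2) a2(2) by (force simp: crd_add)
      thus False using ok[OF a1(1) a2(1)] by blast
    qed
    thus "abelian_J_antichain R n alpha J A" unfolding abelian_J_antichain_def using assms(5) by blast
  qed
qed


end
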